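(* Let $(X,d^X)$ be a compact metric space, $f$ a homeomorphism of $X$ and $\mu$ a Borel measure on $X$ with $\mu(X)>0$. Then: (i) if $\mu$ is topologically stable with respect to $f$, then $Ts^\mu_f(X)=X$; (ii) for every compact metric space $(Y,d^Y)$ and every homeomorphism $h:X\to Y$, $Ts^{h^*(\mu)}_{h\circ f\circ h^{-1}}(Y)=h(Ts^\mu_f(X))$ and $Sts^{h^*(\mu)}_{h\circ f\circ h^{-1}}(Y)=h(Sts^\mu_f(X))$, where $h^*(\mu)(A)=\mu(h^{-1}(A))$; (iii) if $\mu$ is non-atomic and $x$ is a topologically stable point of $f$, then $x$ is a strong $\mu$-topologically stable point of $f$.
   Context: $B(x,\epsilon)$ and $B[x,\epsilon]$ are the open and closed balls; $\mathcal{O}_g(x)=\{g^n(x):n\in\mathbb{Z}\}$; $d_{C^0}(f,g)=\sup_x d(f(x),g(x))$. For $Z\subset X$, a set-valued map $H:Z\to 2^X$ has domain $Dom(H)=\{z\in Z:H(z)\ne\emptyset\}$; it is compact valued if each $H(z)$ is compact; $d(H,Id)\le\epsilon$ means $H(z)\subset B[z,\epsilon]$ for all $z\in Z$; $H$ is upper semi-continuous if for each $z\in Dom(H)$ and each open $O\supset H(z)$ there is $\gamma>0$ with $H(w)\subset O$ for all $w\in Z$ with $d(w,z)<\gamma$; $f\circ H=H\circ g$ means $f(H(z))=H(g(z))$ for all $z$. $\mu$ is non-atomic if $\mu(\{x\})=0$ for all $x$. $\mu$ is topologically stable w.r.t. $f$ if for every $\epsilon>0$ there is $\delta>0$ such that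 for every homeomorphism $g$ with $d_{C^0}(f,g)\le\delta$ there is an upper semi-continuous compact valued $H:X\to 2^X$ with measurable domain such that $\mu(X\setminus Dom(H))=0$, $\mu(H(x))=0$ for all $x$, $d(H,Id)\le\epsilon$ and $f\circ H=H\circ g$. A point $x$ is a $\mu$-topologically stable point of $f$ if for every $\epsilon>0$ there is $\delta>0$ such that for every homeomorphism $g$ of $X$ with $d_{C^0}(f,g)\le\delta$ there is an upper semi-continuous compact valued $H:\overline{\mathcal{O}_g(x)}\to 2^X$ with measurable domain such that (i) $\mu(H(z))=0$ for each $z\in B(x,\delta/4)\cap\overline{\mathcal{O}_g(x)}$, (ii) $d(H,Id)\le\epsilon$, (iii) $f\circ H=H\circ g$. $x$ is a strong $\mu$-topologically stable point if moreover (for the given $\epsilon$, together with $\delta$) there is a Borel set $B\subset X$ with $\mu(X\setminus B)=0$ such that additionally (iv) $\mu(X\setminus Dom(H))\le\mu(X\setminus U)$, where $U=B\cap B(x,\delta)\cap\overline{\mathcal{O}_g(x)}$. $Ts^\mu_f(X)$ and $Sts^\mu_f(X)$ denote the sets of $\mu$-topologically stable and strong $\mu$-topologically stable points. $x$ is a topologically stable point of $f$ if for every $\epsilon>0$ there is $\delta>0$ such that for every homeomorphism $g$ with $d_{C^0}(f,g)\le\delta$ there is a continuous $h:\overline{\mathcal{O}_g(x)}\to X$ with $f\circ h=h\circ g$ and $d(h(z),z)\le\epsilon$ for all $z\in\overline{\mathcal{O}_g(x)}$. *)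

theory Defs
  imports "HOL-Probability.Probability"
begin

text \<open>The compact metric space X is the universe of a type of class metric_space
  with compact UNIV.  A set-valued map H : Z -> 2^X is modelled as a function
  H :: 'a => 'a set, of which only the values on Z matter.\<close>

definition homeo :: "('a::topological_space \<Rightarrow> 'a) \<Rightarrow> bool" where
  "homeo f \<longleftrightarrow> (\<exists>g. homeomorphism UNIV UNIV f g)"

definition dC0 :: "('a \<Rightarrow> 'b::metric_space) \<Rightarrow> ('a \<Rightarrow> 'b) \<Rightarrow> real" where
  "dC0 f g = (SUP x. dist (f x) (g x))"

definition orbit :: "('a \<Rightarrow> 'a) \<Rightarrow> 'a \<Rightarrow> 'a set" where
  "orbit g x = {(g ^^ n) x | n. True} \<union> {(inv g ^^ n) x | n. True}"

definition Dom :: "'a set \<Rightarrow> ('a \<Rightarrow> 'b set) \<Rightarrow> 'a set" where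
  "Dom Z H = {z \<in> Z. H z \<noteq> {}}"

definition compact_valued :: "'a set \<Rightarrow> ('a \<Rightarrow> 'b::topological_space set) \<Rightarrow> bool" where
  "compact_valued Z H \<longleftrightarrow> (\<forall>z\<in>Z. compact (H z))"

definition usc :: "'a::metric_space set \<Rightarrow> ('a \<Rightarrow> 'b::topological_space set) \<Rightarrow> bool" where
  "usc Z H \<longleftrightarrow> (\<forall>z\<in>Dom Z H. \<forall>V. open V \<and> H z \<subseteq> V \<longrightarrow>
      (\<exists>\<gamma>>0. \<forall>w\<in>Z. dist w z < \<gamma> \<longrightarrow> H w \<subseteq> V))"

definition dist_Id_le :: "'a::metric_space set \<Rightarrow> ('a \<Rightarrow> 'a set) \<Rightarrow> real \<Rightarrow> bool" where
  "dist_Id_le Z H \<epsilon> \<longleftrightarrow> (\<forall>z\<in>Z. H z \<subseteq> cball z \<epsilon>)"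

definition conj_rel :: "'a set \<Rightarrow> ('a \<Rightarrow> 'a) \<Rightarrow> ('a \<Rightarrow> 'a set) \<Rightarrow> ('a \<Rightarrow> 'a) \<Rightarrow> bool" where
  "conj_rel Z f H g \<longleftrightarrow> (\<forall>z\<in>Z. f ` H z = H (g z))"

definition non_atomic :: "'a measure \<Rightarrow> bool" where
  "non_atomic \<mu> \<longleftrightarrow> (\<forall>x. emeasure \<mu> {x} = 0)"

definition measure_top_stable :: "'a::metric_space measure \<Rightarrow> ('a \<Rightarrow> 'a) \<Rightarrow> bool" where
  "measure_top_stable \<mu> f \<longleftrightarrow>
    (\<forall>\<epsilon>>0. \<exists>\<delta>>0. \<forall>g. homeo g \<and> dC0 f g \<le> \<delta> \<longrightarrow>
      (\<exists>H. usc UNIV H \<and> compact_valued UNIV H \<and> Dom UNIV H \<in> sets \<mu> \<and>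
           emeasure \<mu> (UNIV - Dom UNIV H) = 0 \<and> (\<forall>x. emeasure \<mu> (H x) = 0) \<and>
           dist_Id_le UNIV H \<epsilon> \<and> conj_rel UNIV f H g))"

definition mu_ts_point :: "'a::metric_space measure \<Rightarrow> ('a \<Rightarrow> 'a) \<Rightarrow> 'a \<Rightarrow> bool" where
  "mu_ts_point \<mu> f x \<longleftrightarrow>
    (\<forall>\<epsilon>>0. \<exists>\<delta>>0. \<forall>g. homeo g \<and> dC0 f g \<le> \<delta> \<longrightarrow>
      (let Z = closure (orbit g x) in
       \<exists>H. usc Z H \<and> compact_valued Z H \<and> Dom Z H \<in> sets \<mu> \<and>
           (\<forall>z\<in>ball x (\<delta>/4) \<inter> Z. emeasure \<mu> (H z) = 0) \<and>
           dist_Id_le Z H \<epsilon> \<and> conj_rel Z f H g))"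

definition strong_mu_ts_point :: "'a::metric_space measure \<Rightarrow> ('a \<Rightarrow> 'a) \<Rightarrow> 'a \<Rightarrow> bool" where
  "strong_mu_ts_point \<mu> f x \<longleftrightarrow>
    (\<forall>\<epsilon>>0. \<exists>\<delta>>0. \<exists>B. B \<in> sets borel \<and> emeasure \<mu> (UNIV - B) = 0 \<and>
      (\<forall>g. homeo g \<and> dC0 f g \<le> \<delta> \<longrightarrow>
      (let Z = closure (orbit g x); U = B \<inter> ball x \<delta> \<inter> Z in
       \<exists>H. usc Z H \<and> compact_valued Z H \<and> Dom Z H \<in> sets \<mu> \<and>
           (\<forall>z\<in>ball x (\<delta>/4) \<inter> Z. emeasure \<mu> (H z) = 0) \<and>
           dist_Id_le Z H \<epsilon> \<and> conj_rel Z f H g \<and>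
           emeasure \<mu> (UNIV - Dom Z H) \<le> emeasure \<mu> (UNIV - U))))"

definition Ts :: "'a::metric_space measure \<Rightarrow> ('a \<Rightarrow> 'a) \<Rightarrow> 'a set" where
  "Ts \<mu> f = {x. mu_ts_point \<mu> f x}"

definition Sts :: "'a::metric_space measure \<Rightarrow> ('a \<Rightarrow> 'a) \<Rightarrow> 'a set" where
  "Sts \<mu> f = {x. strong_mu_ts_point \<mu> f x}"

definition top_stable_point :: "('a::metric_space \<Rightarrow> 'a) \<Rightarrow> 'a \<Rightarrow> bool" where
  "top_stable_point f x \<longleftrightarrow>
    (\<forall>\<epsilon>>0. \<exists>\<delta>>0. \<forall>g. homeo g \<and> dC0 f g \<le> \<delta> \<longrightarrow>
      (let Z = closure (orbit g x) in
       \<exists>h. continuous_on Z h \<and> (\<forall>z\<in>Z. f (h z) = h (g z)) \<and> (\<forall>z\<in>Z. dist (h z) z \<le> \<epsilon>)))"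

definition pushfwd :: "'a measure \<Rightarrow> ('a \<Rightarrow> 'b::topological_space) \<Rightarrow> 'b measure" where
  "pushfwd \<mu> h = distr \<mu> borel h"

end

theory Submission
  imports Defs
begin


lemma dC0_le_iff:
  fixes f g :: "'a \<Rightarrow> 'b::metric_space"
  assumes "compact (UNIV :: 'b set)"
  shows "dC0 f g \<le> d \<longleftrightarrow> (\<forall>x. dist (f x) (g x) \<le> d)"
proof -
  obtain a :: 'b where True by auto
  have "bounded (UNIV :: 'b set)" using assms compact_imp_bounded by blast
  then obtain e where e: "\<forall>y. dist a y \<le> e" using bounded_any_center[of UNIV a] by auto
  have "dist (f x) (g x) \<le> 2 * e" for x
    using dist_triangle3[of "f x" "g x" a] e[rule_format, of "f x"] e[rule_format, of "g x"] by linarith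
  then have "bdd_above (range (\<lambda>x. dist (f x) (g x)))" by (intro bdd_aboveI[of _ "2*e"]) auto
  then show ?thesis unfolding dC0_def by (simp add: cSUP_le_iff)
qed

lemma dC0_leI:
  fixes f g :: "'a \<Rightarrow> 'b::metric_space"
  shows "(\<And>x. dist (f x) (g x) \<le> d) \<Longrightarrow> dC0 f g \<le> d"
  unfolding dC0_def by (rule cSUP_least) auto

lemma uc_UNIV:
  fixes h :: "'a::metric_space \<Rightarrow> 'b::metric_space"
  assumes "compact (UNIV :: 'a set)" "continuous_on UNIV h" "e > 0"
  shows "\<exists>d>0. \<forall>a b. dist a b < d \<longrightarrow> dist (h a) (h b) < e"
proof -
  have "uniformly_continuous_on UNIV h" using assms compact_uniformly_continuous by blast
  then obtain d where "d > 0" "\<forall>a\<in>UNIV. \<forall>b\<in>UNIV. dist b a < d \<longrightarrow> dist (h b) (h a) < e"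
    using assms(3) unfolding uniformly_continuous_on_def by blast
  then show ?thesis by (metis UNIV_I dist_commute)
qed

lemma closure_homeo_image:
  assumes "homeomorphism UNIV UNIV h k"
  shows "closure (h ` S) = h ` closure S"
proof
  have ch: "continuous_on UNIV h" and ck: "continuous_on UNIV k" and kh: "\<And>x. k (h x) = x" and hk: "\<And>y. h (k y) = y"
    using assms unfolding homeomorphism_def by auto
  show "h ` closure S \<subseteq> closure (h ` S)"
    by (rule image_closure_subset) (auto intro: continuous_on_subset[OF ch] closure_subset image_eqI subsetD[OF closure_subset])
  have "k ` closure (h ` S) \<subseteq> closure (k ` h ` S)"
    by (rule image_closure_subset) (auto intro: continuous_on_subset[OF ck] closure_subset image_eqI subsetD[OF closure_subset])
  also have "k ` h ` S = S" using kh by (simp add: image_image)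
  finally show "closure (h ` S) \<subseteq> h ` closure S"
    by (metis hk image_eqI image_subset_iff subsetI)
qed

lemma inv_homeo:
  assumes "homeomorphism UNIV UNIV g g'"
  shows "inv g = g'"
proof
  fix y
  have "g (g' y) = y" and inj: "inj g" using assms unfolding homeomorphism_def
    by (auto intro: inj_on_inverseI)
  then show "inv g y = g' y" by (metis inv_f_f)
qed

lemma orbit_conj:
  assumes "homeomorphism UNIV UNIV h k" "homeomorphism UNIV UNIV g g'"
  shows "orbit g (h x) = h ` orbit (k \<circ> g \<circ> h) x"
proof -
  have kh: "\<And>x. k (h x) = x" and hk: "\<And>y. h (k y) = y"
    using assms unfolding homeomorphism_def by auto
  have hg: "homeomorphism UNIV UNIV (k \<circ> g \<circ> h) (k \<circ> g' \<circ> h)"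
    using homeomorphism_compose[OF homeomorphism_compose[OF assms(1) assms(2)] homeomorphism_symD[OF assms(1)]]
    by (simp add: o_assoc)
  have i1: "inv g = g'" by (rule inv_homeo[OF assms(2)])
  have i2: "inv (k \<circ> g \<circ> h) = k \<circ> g' \<circ> h" by (rule inv_homeo[OF hg])
  have it: "((k \<circ> q \<circ> h) ^^ n) x = k ((q ^^ n) (h x))" for q n
    by (induction n) (auto simp: kh hk)
  have c: "{(q ^^ n) (h x) |n. True} = h ` {k ((q ^^ n) (h x)) |n. True}" for q
  proof -
    have "{(q ^^ n) (h x) |n. True} = (\<lambda>n. (q ^^ n) (h x)) ` UNIV" by auto
    also have "\<dots> = h ` ((\<lambda>n. k ((q ^^ n) (h x))) ` UNIV)" by (simp add: image_image hk)
    also have "(\<lambda>n. k ((q ^^ n) (h x))) ` UNIV = {k ((q ^^ n) (h x)) |n. True}" by auto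
    finally show ?thesis .
  qed
  show ?thesis unfolding orbit_def i1 i2 it image_Un c ..
qed

lemma borel_preimage_cont:
  assumes "continuous_on UNIV (k :: 'b::topological_space \<Rightarrow> 'a::topological_space)" "A \<in> sets borel"
  shows "k -` A \<in> sets borel"
  using measurable_sets[OF borel_measurable_continuous_onI[OF assms(1)] assms(2)] by simp

lemma pf_facts:
  fixes \<mu> :: "'a::metric_space measure" and h :: "'a \<Rightarrow> 'b::metric_space"
  assumes hom: "homeomorphism UNIV UNIV h k" and sm: "sets \<mu> = sets borel"
  shows "sets (pushfwd \<mu> h) = sets borel"
    and "A \<in> sets borel \<Longrightarrow> emeasure (pushfwd \<mu> h) A = emeasure \<mu> (k ` A)"
proof -
  show "sets (pushfwd \<mu> h) = sets borel" unfolding pushfwd_def by simp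
  have ch: "continuous_on UNIV h" and kh: "\<And>x. k (h x) = x" and hk: "\<And>y. h (k y) = y"
    using hom unfolding homeomorphism_def by auto
  have sp: "space \<mu> = UNIV" using sets_eq_imp_space_eq[OF sm] by simp
  have meas: "h \<in> measurable \<mu> borel"
    using borel_measurable_continuous_onI[OF ch] measurable_cong_sets[OF sm refl] by blast
  assume A: "A \<in> sets borel"
  have "h -` A \<inter> space \<mu> = k ` A" unfolding sp
    by (auto simp: image_iff) (metis kh, metis hk)
  then show "emeasure (pushfwd \<mu> h) A = emeasure \<mu> (k ` A)"
    unfolding pushfwd_def using emeasure_distr[OF meas A] by simp
qed

lemma core:
  fixes \<mu> :: "'a::metric_space measure" and h :: "'a \<Rightarrow> 'b::metric_space"
    and H :: "'a \<Rightarrow> 'a set"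
  assumes hom: "homeomorphism UNIV UNIV h k"
    and cY: "compact (UNIV::'b set)"
    and sm: "sets \<mu> = sets borel"
    and gh: "homeomorphism UNIV UNIV g g'"
    and Z: "Z = closure (orbit (k \<circ> g \<circ> h) x)"
    and Husc: "usc Z H" and Hcv: "compact_valued Z H" and HD: "Dom Z H \<in> sets \<mu>"
    and Hd: "dist_Id_le Z H \<epsilon>'" and Hc: "conj_rel Z f H (k \<circ> g \<circ> h)"
    and eh: "\<forall>a b. dist a b \<le> \<epsilon>' \<longrightarrow> dist (h a) (h b) \<le> \<epsilon>"
  defines "HY \<equiv> \<lambda>z. h ` H (k z)" and "ZY \<equiv> closure (orbit g (h x))"
  shows "usc ZY HY" "compact_valued ZY HY" "Dom ZY HY \<in> sets (pushfwd \<mu> h)"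
    "dist_Id_le ZY HY \<epsilon>" "conj_rel ZY (h \<circ> f \<circ> k) HY g"
    "\<And>z. z \<in> ZY \<longleftrightarrow> k z \<in> Z"
    "\<And>z. z \<in> ZY \<Longrightarrow> emeasure (pushfwd \<mu> h) (HY z) = emeasure \<mu> (H (k z))"
    "emeasure (pushfwd \<mu> h) (UNIV - Dom ZY HY) = emeasure \<mu> (UNIV - Dom Z H)"
proof -
  have ch: "continuous_on UNIV h" and ck: "continuous_on UNIV k"
    and kh: "\<And>x. k (h x) = x" and hk: "\<And>y. h (k y) = y"
    using hom unfolding homeomorphism_def by auto
  have ZYeq: "ZY = h ` Z" unfolding ZY_def Z
    using orbit_conj[OF hom gh] closure_homeo_image[OF hom] by simp
  show mem: "z \<in> ZY \<longleftrightarrow> k z \<in> Z" for z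
    unfolding ZYeq by (metis hk imageE image_eqI kh)
  have DomEq: "Dom ZY HY = k -` Dom Z H"
    unfolding Dom_def HY_def using mem by auto
  have sps: "sets (pushfwd \<mu> h) = sets borel" using pf_facts[OF hom sm] by simp
  have DB: "Dom Z H \<in> sets borel" using HD sm by simp
  show "Dom ZY HY \<in> sets (pushfwd \<mu> h)"
    unfolding sps DomEq by (rule borel_preimage_cont[OF ck DB])
  have "emeasure (pushfwd \<mu> h) (UNIV - Dom ZY HY) = emeasure \<mu> (k ` (UNIV - Dom ZY HY))"
    by (rule pf_facts(2)[OF hom sm]) (metis DomEq borel_preimage_cont[OF ck DB] sets.compl_sets space_borel)
  also have "k ` (UNIV - Dom ZY HY) = UNIV - Dom Z H"
    unfolding DomEq
  proof (intro equalityI subsetI)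
    fix y assume "y \<in> UNIV - Dom Z H"
    then show "y \<in> k ` (UNIV - k -` Dom Z H)" using kh[of y] by (metis DiffI UNIV_I image_eqI vimageE DiffD2)
  qed auto
  finally show "emeasure (pushfwd \<mu> h) (UNIV - Dom ZY HY) = emeasure \<mu> (UNIV - Dom Z H)" .
  have cpt: "compact (HY z)" if "z \<in> ZY" for z
    unfolding HY_def using Hcv mem that unfolding compact_valued_def
    by (auto intro: compact_continuous_image continuous_on_subset[OF ch])
  show "compact_valued ZY HY" using cpt unfolding compact_valued_def by auto
  show "emeasure (pushfwd \<mu> h) (HY z) = emeasure \<mu> (H (k z))" if "z \<in> ZY" for z
  proof -
    have "HY z \<in> sets borel" using cpt[OF that] by (simp add: borel_closed compact_imp_closed)
    then have "emeasure (pushfwd \<mu> h) (HY z) = emeasure \<mu> (k ` HY z)" by (rule pf_facts(2)[OF hom sm])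
    also have "k ` HY z = H (k z)" unfolding HY_def by (simp add: image_image kh)
    finally show ?thesis .
  qed
  show "dist_Id_le ZY HY \<epsilon>"
    unfolding dist_Id_le_def
  proof
    fix z assume "z \<in> ZY"
    then have "H (k z) \<subseteq> cball (k z) \<epsilon>'" using Hd mem unfolding dist_Id_le_def by auto
    then show "HY z \<subseteq> cball z \<epsilon>" unfolding HY_def using eh hk by (force simp: mem_cball)
  qed
  show "conj_rel ZY (h \<circ> f \<circ> k) HY g"
    unfolding conj_rel_def
  proof
    fix z assume "z \<in> ZY"
    then have "f ` H (k z) = H (k (g z))" using Hc mem unfolding conj_rel_def by (auto simp: hk)
    then show "(h \<circ> f \<circ> k) ` HY z = HY (g z)" unfolding HY_def by (simp add: image_image kh) (metis image_image)
  qed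
  show "usc ZY HY"
    unfolding usc_def
  proof (intro ballI allI impI)
    fix z V assume zD: "z \<in> Dom ZY HY" and V: "open V \<and> HY z \<subseteq> V"
    have kzD: "k z \<in> Dom Z H" using zD DomEq by auto
    have oV: "open (h -` V)" using V ch by (simp add: continuous_on_open_vimage)
    have "H (k z) \<subseteq> h -` V" using V unfolding HY_def by auto
    then obtain \<gamma> where g0: "\<gamma> > 0" and g: "\<forall>w\<in>Z. dist w (k z) < \<gamma> \<longrightarrow> H w \<subseteq> h -` V"
      using Husc kzD oV unfolding usc_def by blast
    obtain d where d0: "d > 0" and d: "\<forall>a b. dist a b < d \<longrightarrow> dist (k a) (k b) < \<gamma>"
      using uc_UNIV[OF cY ck g0] by blast
    show "\<exists>\<gamma>>0. \<forall>w\<in>ZY. dist w z < \<gamma> \<longrightarrow> HY w \<subseteq> V"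
    proof (intro exI[of _ d] conjI ballI impI d0)
      fix w assume "w \<in> ZY" "dist w z < d"
      then have "k w \<in> Z" "dist (k w) (k z) < \<gamma>" using mem d by auto
      then have "H (k w) \<subseteq> h -` V" using g by auto
      then show "HY w \<subseteq> V" unfolding HY_def by auto
    qed
  qed
qed


lemma img_compl:
  assumes "homeomorphism UNIV UNIV h k"
  shows "k ` (UNIV - S) = UNIV - h -` S"
proof -
  have kh: "\<And>x. k (h x) = x" and hk: "\<And>y. h (k y) = y"
    using assms unfolding homeomorphism_def by auto
  show ?thesis
  proof (intro equalityI subsetI)
    fix y assume "y \<in> UNIV - h -` S"
    then show "y \<in> k ` (UNIV - S)" using kh[of y] by (metis DiffI UNIV_I image_eqI vimageI DiffD2)
  qed (auto simp: hk)
qed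

lemma homeo_conj:
  assumes "homeomorphism UNIV UNIV h k" "homeomorphism UNIV UNIV g g'"
  shows "homeo (k \<circ> g \<circ> h)"
  unfolding homeo_def
  using homeomorphism_compose[OF homeomorphism_compose[OF assms(1) assms(2)] homeomorphism_symD[OF assms(1)]]
  by (auto simp add: o_assoc)


lemma Ts_transfer:
  fixes \<mu> :: "'a::metric_space measure" and h :: "'a \<Rightarrow> 'b::metric_space"
  assumes hom: "homeomorphism UNIV UNIV h k"
    and cX: "compact (UNIV::'a set)" and cY: "compact (UNIV::'b set)"
    and sm: "sets \<mu> = sets borel"
    and xT: "x \<in> Ts \<mu> f"
  shows "h x \<in> Ts (pushfwd \<mu> h) (h \<circ> f \<circ> k)"
proof -
  have ch: "continuous_on UNIV h" and ck: "continuous_on UNIV k"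
    and kh: "\<And>x. k (h x) = x" and hk: "\<And>y. h (k y) = y"
    using hom unfolding homeomorphism_def by auto
  show ?thesis unfolding Ts_def mem_Collect_eq mu_ts_point_def Let_def
  proof (intro allI impI)
    fix \<epsilon> :: real assume e0: "\<epsilon> > 0"
    obtain d0 where d00: "d0 > 0" and d0: "\<forall>a b. dist a b < d0 \<longrightarrow> dist (h a) (h b) < \<epsilon>"
      using uc_UNIV[OF cX ch e0] by blast
    have eh: "\<forall>a b. dist a b \<le> d0/2 \<longrightarrow> dist (h a) (h b) \<le> \<epsilon>"
    proof (intro allI impI)
      fix a b :: 'a assume "dist a b \<le> d0/2"
      then have "dist a b < d0" using d00 by linarith
      then show "dist (h a) (h b) \<le> \<epsilon>" using d0 by (simp add: less_imp_le)
    qed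
    obtain \<delta>' where dp0: "\<delta>' > 0" and P: "\<forall>g. homeo g \<and> dC0 f g \<le> \<delta>' \<longrightarrow>
       (\<exists>H. usc (closure (orbit g x)) H \<and> compact_valued (closure (orbit g x)) H \<and>
          Dom (closure (orbit g x)) H \<in> sets \<mu> \<and>
          (\<forall>z\<in>ball x (\<delta>'/4) \<inter> closure (orbit g x). emeasure \<mu> (H z) = 0) \<and>
          dist_Id_le (closure (orbit g x)) H (d0/2) \<and> conj_rel (closure (orbit g x)) f H g)"
      using xT[unfolded Ts_def mem_Collect_eq mu_ts_point_def Let_def, rule_format, OF half_gt_zero[OF d00]]
      by blast
    have q0: "\<delta>'/4 > 0" using dp0 by simp
    obtain d1 where d10: "d1 > 0" and d1: "\<forall>a b. dist a b < d1 \<longrightarrow> dist (k a) (k b) < \<delta>'/4"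
      using uc_UNIV[OF cY ck q0] by blast
    show "\<exists>\<delta>>0. \<forall>g. homeo g \<and> dC0 (h \<circ> f \<circ> k) g \<le> \<delta> \<longrightarrow>
       (\<exists>H. usc (closure (orbit g (h x))) H \<and> compact_valued (closure (orbit g (h x))) H \<and>
          Dom (closure (orbit g (h x))) H \<in> sets (pushfwd \<mu> h) \<and>
          (\<forall>z\<in>ball (h x) (\<delta>/4) \<inter> closure (orbit g (h x)). emeasure (pushfwd \<mu> h) (H z) = 0) \<and>
          dist_Id_le (closure (orbit g (h x))) H \<epsilon> \<and> conj_rel (closure (orbit g (h x))) (h \<circ> f \<circ> k) H g)"
    proof (intro exI[of _ "d1/2"] conjI allI impI)
      show "d1/2 > 0" using d10 by simp
      fix g assume ga: "homeo g \<and> dC0 (h \<circ> f \<circ> k) g \<le> d1/2"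
      obtain g' where gh: "homeomorphism UNIV UNIV g g'" using ga homeo_def by blast
      have pw: "dist ((h \<circ> f \<circ> k) y) (g y) \<le> d1/2" for y
        using dC0_le_iff[OF cY, THEN iffD1, OF conjunct2[OF ga]] by blast
      have dc: "dC0 f (k \<circ> g \<circ> h) \<le> \<delta>'"
      proof (rule dC0_leI)
        fix a
        have "dist ((h \<circ> f \<circ> k) (h a)) (g (h a)) < d1" using pw[of "h a"] d10 by linarith
        then have "dist (k ((h \<circ> f \<circ> k) (h a))) (k (g (h a))) < \<delta>'/4" using d1 by blast
        then show "dist (f a) ((k \<circ> g \<circ> h) a) \<le> \<delta>'" using dp0 by (simp add: kh)
      qed
      obtain H where Hp: "usc (closure (orbit (k \<circ> g \<circ> h) x)) H"
          "compact_valued (closure (orbit (k \<circ> g \<circ> h) x)) H"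
          "Dom (closure (orbit (k \<circ> g \<circ> h) x)) H \<in> sets \<mu>"
          "\<forall>z\<in>ball x (\<delta>'/4) \<inter> closure (orbit (k \<circ> g \<circ> h) x). emeasure \<mu> (H z) = 0"
          "dist_Id_le (closure (orbit (k \<circ> g \<circ> h) x)) H (d0/2)"
          "conj_rel (closure (orbit (k \<circ> g \<circ> h) x)) f H (k \<circ> g \<circ> h)"
        using P[rule_format, OF conjI[OF homeo_conj[OF hom gh] dc]] by blast
      note C = core[OF hom cY sm gh refl Hp(1,2,3,5,6) eh]
      show "\<exists>H. usc (closure (orbit g (h x))) H \<and> compact_valued (closure (orbit g (h x))) H \<and>
          Dom (closure (orbit g (h x))) H \<in> sets (pushfwd \<mu> h) \<and>
          (\<forall>z\<in>ball (h x) (d1/2/4) \<inter> closure (orbit g (h x)). emeasure (pushfwd \<mu> h) (H z) = 0) \<and>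
          dist_Id_le (closure (orbit g (h x))) H \<epsilon> \<and> conj_rel (closure (orbit g (h x))) (h \<circ> f \<circ> k) H g"
      proof (intro exI[of _ "\<lambda>z. h ` H (k z)"] conjI ballI C(1-5))
        fix z assume z: "z \<in> ball (h x) (d1/2/4) \<inter> closure (orbit g (h x))"
        then have "z \<in> closure (orbit g (h x))" by simp
        then have kz: "k z \<in> closure (orbit (k \<circ> g \<circ> h) x)" by (rule C(6)[THEN iffD1])
        have "dist (h x) z < d1" using z d10 by (auto simp: mem_ball)
        then have "dist (k (h x)) (k z) < \<delta>'/4" using d1 by blast
        then have "dist x (k z) < \<delta>'/4" by (simp add: kh)
        then have "emeasure \<mu> (H (k z)) = 0" using Hp(4) kz by (auto simp: mem_ball)
        then show "emeasure (pushfwd \<mu> h) (h ` H (k z)) = 0" using C(7) z by auto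
      qed
    qed
  qed
qed


lemma Sts_transfer:
  fixes \<mu> :: "'a::metric_space measure" and h :: "'a \<Rightarrow> 'b::metric_space"
  assumes hom: "homeomorphism UNIV UNIV h k"
    and cX: "compact (UNIV::'a set)" and cY: "compact (UNIV::'b set)"
    and sm: "sets \<mu> = sets borel"
    and xT: "x \<in> Sts \<mu> f"
  shows "h x \<in> Sts (pushfwd \<mu> h) (h \<circ> f \<circ> k)"
proof -
  have ch: "continuous_on UNIV h" and ck: "continuous_on UNIV k"
    and kh: "\<And>x. k (h x) = x" and hk: "\<And>y. h (k y) = y"
    using hom unfolding homeomorphism_def by auto
  show ?thesis unfolding Sts_def mem_Collect_eq strong_mu_ts_point_def Let_def
  proof (intro allI impI)
    fix \<epsilon> :: real assume e0: "\<epsilon> > 0"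
    obtain d0 where d00: "d0 > 0" and d0: "\<forall>a b. dist a b < d0 \<longrightarrow> dist (h a) (h b) < \<epsilon>"
      using uc_UNIV[OF cX ch e0] by blast
    have eh: "\<forall>a b. dist a b \<le> d0/2 \<longrightarrow> dist (h a) (h b) \<le> \<epsilon>"
    proof (intro allI impI)
      fix a b :: 'a assume "dist a b \<le> d0/2"
      then have "dist a b < d0" using d00 by linarith
      then show "dist (h a) (h b) \<le> \<epsilon>" using d0 by (simp add: less_imp_le)
    qed
    obtain \<delta>' B where dp0: "\<delta>' > 0" and B: "B \<in> sets borel" and B0: "emeasure \<mu> (UNIV - B) = 0"
      and P: "\<forall>g. homeo g \<and> dC0 f g \<le> \<delta>' \<longrightarrow>
       (\<exists>H. usc (closure (orbit g x)) H \<and> compact_valued (closure (orbit g x)) H \<and>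
          Dom (closure (orbit g x)) H \<in> sets \<mu> \<and>
          (\<forall>z\<in>ball x (\<delta>'/4) \<inter> closure (orbit g x). emeasure \<mu> (H z) = 0) \<and>
          dist_Id_le (closure (orbit g x)) H (d0/2) \<and> conj_rel (closure (orbit g x)) f H g \<and>
          emeasure \<mu> (UNIV - Dom (closure (orbit g x)) H) \<le> emeasure \<mu> (UNIV - B \<inter> ball x \<delta>' \<inter> closure (orbit g x)))"
      using xT[unfolded Sts_def mem_Collect_eq strong_mu_ts_point_def Let_def, rule_format, OF half_gt_zero[OF d00]]
      by blast
    have q0: "\<delta>'/4 > 0" using dp0 by simp
    obtain d1 where d10: "d1 > 0" and d1: "\<forall>a b. dist a b < d1 \<longrightarrow> dist (k a) (k b) < \<delta>'/4"
      using uc_UNIV[OF cY ck q0] by blast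
    have kB: "k -` B \<in> sets borel" by (rule borel_preimage_cont[OF ck B])
    have kB0: "emeasure (pushfwd \<mu> h) (UNIV - k -` B) = 0"
    proof -
      have "UNIV - k -` B \<in> sets borel" by (metis kB sets.compl_sets space_borel)
      then have "emeasure (pushfwd \<mu> h) (UNIV - k -` B) = emeasure \<mu> (k ` (UNIV - k -` B))"
        by (rule pf_facts(2)[OF hom sm])
      also have "k ` (UNIV - k -` B) = UNIV - B" by (auto simp: img_compl[OF hom] kh)
      finally show ?thesis using B0 by simp
    qed
    show "\<exists>\<delta>>0. \<exists>B. B \<in> sets borel \<and> emeasure (pushfwd \<mu> h) (UNIV - B) = 0 \<and>
      (\<forall>g. homeo g \<and> dC0 (h \<circ> f \<circ> k) g \<le> \<delta> \<longrightarrow>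
       (\<exists>H. usc (closure (orbit g (h x))) H \<and> compact_valued (closure (orbit g (h x))) H \<and>
          Dom (closure (orbit g (h x))) H \<in> sets (pushfwd \<mu> h) \<and>
          (\<forall>z\<in>ball (h x) (\<delta>/4) \<inter> closure (orbit g (h x)). emeasure (pushfwd \<mu> h) (H z) = 0) \<and>
          dist_Id_le (closure (orbit g (h x))) H \<epsilon> \<and> conj_rel (closure (orbit g (h x))) (h \<circ> f \<circ> k) H g \<and>
          emeasure (pushfwd \<mu> h) (UNIV - Dom (closure (orbit g (h x))) H)
            \<le> emeasure (pushfwd \<mu> h) (UNIV - B \<inter> ball (h x) \<delta> \<inter> closure (orbit g (h x)))))"
    proof (intro exI[of _ "d1/2"] exI[of _ "k -` B"] conjI allI impI kB kB0)
      show "d1/2 > 0" using d10 by simp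
      fix g assume ga: "homeo g \<and> dC0 (h \<circ> f \<circ> k) g \<le> d1/2"
      obtain g' where gh: "homeomorphism UNIV UNIV g g'" using ga homeo_def by blast
      have pw: "dist ((h \<circ> f \<circ> k) y) (g y) \<le> d1/2" for y
        using dC0_le_iff[OF cY, THEN iffD1, OF conjunct2[OF ga]] by blast
      have dc: "dC0 f (k \<circ> g \<circ> h) \<le> \<delta>'"
      proof (rule dC0_leI)
        fix a
        have "dist ((h \<circ> f \<circ> k) (h a)) (g (h a)) < d1" using pw[of "h a"] d10 by linarith
        then have "dist (k ((h \<circ> f \<circ> k) (h a))) (k (g (h a))) < \<delta>'/4" using d1 by blast
        then show "dist (f a) ((k \<circ> g \<circ> h) a) \<le> \<delta>'" using dp0 by (simp add: kh)
      qed
      obtain H where Hp: "usc (closure (orbit (k \<circ> g \<circ> h) x)) H"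
          "compact_valued (closure (orbit (k \<circ> g \<circ> h) x)) H"
          "Dom (closure (orbit (k \<circ> g \<circ> h) x)) H \<in> sets \<mu>"
          "\<forall>z\<in>ball x (\<delta>'/4) \<inter> closure (orbit (k \<circ> g \<circ> h) x). emeasure \<mu> (H z) = 0"
          "dist_Id_le (closure (orbit (k \<circ> g \<circ> h) x)) H (d0/2)"
          "conj_rel (closure (orbit (k \<circ> g \<circ> h) x)) f H (k \<circ> g \<circ> h)"
          "emeasure \<mu> (UNIV - Dom (closure (orbit (k \<circ> g \<circ> h) x)) H) \<le> emeasure \<mu> (UNIV - B \<inter> ball x \<delta>' \<inter> closure (orbit (k \<circ> g \<circ> h) x))"
        using P[rule_format, OF conjI[OF homeo_conj[OF hom gh] dc]] by blast
      note C = core[OF hom cY sm gh refl Hp(1,2,3,5,6) eh]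
      let ?Z = "closure (orbit (k \<circ> g \<circ> h) x)"
      let ?ZY = "closure (orbit g (h x))"
      let ?UY = "k -` B \<inter> ball (h x) (d1/2) \<inter> ?ZY"
      have UYb0: "?UY \<in> sets borel" using kB by (intro sets.Int) (auto intro: borel_open borel_closed)
      have UYb: "UNIV - ?UY \<in> sets borel" using UYb0 by (metis sets.compl_sets space_borel)
      have sub: "UNIV - B \<inter> ball x \<delta>' \<inter> ?Z \<subseteq> k ` (UNIV - ?UY)"
      proof
        fix y assume y: "y \<in> UNIV - B \<inter> ball x \<delta>' \<inter> ?Z"
        have "h y \<notin> ?UY"
        proof
          assume hy: "h y \<in> ?UY"
          then have "y \<in> B" by (simp add: kh)
          from hy have "dist (h x) (h y) < d1" using d10 by (auto simp: mem_ball)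
          then have "dist (k (h x)) (k (h y)) < \<delta>'/4" using d1 by blast
          then have "y \<in> ball x \<delta>'" using dp0 by (simp add: kh mem_ball)
          from hy have "h y \<in> ?ZY" by simp
          then have "y \<in> ?Z" using C(6)[of "h y"] by (simp add: kh)
          show False using y \<open>y \<in> B\<close> \<open>y \<in> ball x \<delta>'\<close> \<open>y \<in> ?Z\<close> by blast
        qed
        then show "y \<in> k ` (UNIV - ?UY)" by (metis DiffI UNIV_I image_eqI kh)
      qed
      have "emeasure (pushfwd \<mu> h) (UNIV - Dom ?ZY (\<lambda>z. h ` H (k z))) = emeasure \<mu> (UNIV - Dom ?Z H)"
        by (rule C(8))
      also have "\<dots> \<le> emeasure \<mu> (UNIV - B \<inter> ball x \<delta>' \<inter> ?Z)" by (rule Hp(7))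
      also have "\<dots> \<le> emeasure \<mu> (k ` (UNIV - ?UY))"
      proof (rule emeasure_mono[OF sub])
        have "k ` (UNIV - ?UY) = UNIV - h -` ?UY" by (rule img_compl[OF hom])
        moreover have "h -` ?UY \<in> sets borel"
          by (rule borel_preimage_cont[OF ch UYb0])
        ultimately show "k ` (UNIV - ?UY) \<in> sets \<mu>" using sm by (metis sets.compl_sets space_borel)
      qed
      also have "\<dots> = emeasure (pushfwd \<mu> h) (UNIV - ?UY)"
        by (rule pf_facts(2)[OF hom sm UYb, symmetric])
      finally have last: "emeasure (pushfwd \<mu> h) (UNIV - Dom ?ZY (\<lambda>z. h ` H (k z))) \<le> emeasure (pushfwd \<mu> h) (UNIV - ?UY)" .
      show "\<exists>H. usc ?ZY H \<and> compact_valued ?ZY H \<and>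
          Dom ?ZY H \<in> sets (pushfwd \<mu> h) \<and>
          (\<forall>z\<in>ball (h x) (d1/2/4) \<inter> ?ZY. emeasure (pushfwd \<mu> h) (H z) = 0) \<and>
          dist_Id_le ?ZY H \<epsilon> \<and> conj_rel ?ZY (h \<circ> f \<circ> k) H g \<and>
          emeasure (pushfwd \<mu> h) (UNIV - Dom ?ZY H) \<le> emeasure (pushfwd \<mu> h) (UNIV - ?UY)"
      proof (intro exI[of _ "\<lambda>z. h ` H (k z)"] conjI ballI C(1-5) last)
        fix z assume z: "z \<in> ball (h x) (d1/2/4) \<inter> ?ZY"
        then have "z \<in> ?ZY" by simp
        then have kz: "k z \<in> ?Z" by (rule C(6)[THEN iffD1])
        have "dist (h x) z < d1" using z d10 by (auto simp: mem_ball)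
        then have "dist (k (h x)) (k z) < \<delta>'/4" using d1 by blast
        then have "dist x (k z) < \<delta>'/4" by (simp add: kh)
        then have "emeasure \<mu> (H (k z)) = 0" using Hp(4) kz by (auto simp: mem_ball)
        then show "emeasure (pushfwd \<mu> h) (h ` H (k z)) = 0" using C(7) z by auto
      qed
    qed
  qed
qed



lemma part1:
  fixes \<mu> :: "'a::metric_space measure"
  assumes sm: "sets \<mu> = sets borel" and st: "measure_top_stable \<mu> f"
  shows "mu_ts_point \<mu> f x"
  unfolding mu_ts_point_def Let_def
proof (intro allI impI)
  fix \<epsilon> :: real assume e0: "\<epsilon> > 0"
  obtain \<delta> where d0: "\<delta> > 0" and P: "\<forall>g. homeo g \<and> dC0 f g \<le> \<delta> \<longrightarrow>
      (\<exists>H. usc UNIV H \<and> compact_valued UNIV H \<and> Dom UNIV H \<in> sets \<mu> \<and>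
           emeasure \<mu> (UNIV - Dom UNIV H) = 0 \<and> (\<forall>x. emeasure \<mu> (H x) = 0) \<and>
           dist_Id_le UNIV H \<epsilon> \<and> conj_rel UNIV f H g)"
    using st[unfolded measure_top_stable_def, rule_format, OF e0] by blast
  show "\<exists>\<delta>>0. \<forall>g. homeo g \<and> dC0 f g \<le> \<delta> \<longrightarrow>
       (\<exists>H. usc (closure (orbit g x)) H \<and> compact_valued (closure (orbit g x)) H \<and>
          Dom (closure (orbit g x)) H \<in> sets \<mu> \<and>
          (\<forall>z\<in>ball x (\<delta>/4) \<inter> closure (orbit g x). emeasure \<mu> (H z) = 0) \<and>
          dist_Id_le (closure (orbit g x)) H \<epsilon> \<and> conj_rel (closure (orbit g x)) f H g)"
  proof (intro exI[of _ \<delta>] conjI allI impI d0)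
    fix g assume ga: "homeo g \<and> dC0 f g \<le> \<delta>"
    obtain H where H: "usc UNIV H" "compact_valued UNIV H" "Dom UNIV H \<in> sets \<mu>"
      "\<forall>x. emeasure \<mu> (H x) = 0" "dist_Id_le UNIV H \<epsilon>" "conj_rel UNIV f H g"
      using P[rule_format, OF ga] by blast
    let ?Z = "closure (orbit g x)"
    have "?Z \<in> sets \<mu>" using sm by (simp add: borel_closed)
    then have "Dom UNIV H \<inter> ?Z \<in> sets \<mu>" using H(3) by (rule sets.Int[rotated])
    moreover have "Dom ?Z H = Dom UNIV H \<inter> ?Z" unfolding Dom_def by auto
    ultimately have D: "Dom ?Z H \<in> sets \<mu>" by simp
    have U: "usc ?Z H" unfolding usc_def
    proof (intro ballI allI impI)
      fix z V assume z: "z \<in> Dom ?Z H" and V: "open V \<and> H z \<subseteq> V"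
      have "z \<in> Dom UNIV H" using z by (simp add: Dom_def)
      then obtain \<gamma> where "\<gamma> > 0" "\<forall>w\<in>UNIV. dist w z < \<gamma> \<longrightarrow> H w \<subseteq> V"
        using H(1) V unfolding usc_def by blast
      then show "\<exists>\<gamma>>0. \<forall>w\<in>?Z. dist w z < \<gamma> \<longrightarrow> H w \<subseteq> V" by blast
    qed
    show "\<exists>H. usc ?Z H \<and> compact_valued ?Z H \<and> Dom ?Z H \<in> sets \<mu> \<and>
          (\<forall>z\<in>ball x (\<delta>/4) \<inter> ?Z. emeasure \<mu> (H z) = 0) \<and>
          dist_Id_le ?Z H \<epsilon> \<and> conj_rel ?Z f H g"
    proof (intro exI[of _ H] conjI U D ballI)
      show "compact_valued ?Z H" using H(2) unfolding compact_valued_def by simp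
      show "dist_Id_le ?Z H \<epsilon>" using H(5) unfolding dist_Id_le_def by simp
      show "conj_rel ?Z f H g" using H(6) unfolding conj_rel_def by simp
      fix z show "emeasure \<mu> (H z) = 0" using H(4) by simp
    qed
  qed
qed

lemma part3:
  fixes \<mu> :: "'a::metric_space measure"
  assumes sm: "sets \<mu> = sets borel" and na: "non_atomic \<mu>" and tp: "top_stable_point f x"
  shows "strong_mu_ts_point \<mu> f x"
  unfolding strong_mu_ts_point_def Let_def
proof (intro allI impI)
  fix \<epsilon> :: real assume e0: "\<epsilon> > 0"
  obtain \<delta> where d0: "\<delta> > 0" and P: "\<forall>g. homeo g \<and> dC0 f g \<le> \<delta> \<longrightarrow>
       (\<exists>h. continuous_on (closure (orbit g x)) h \<and> (\<forall>z\<in>closure (orbit g x). f (h z) = h (g z))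
          \<and> (\<forall>z\<in>closure (orbit g x). dist (h z) z \<le> \<epsilon>))"
    using tp[unfolded top_stable_point_def Let_def, rule_format, OF e0] by blast
  show "\<exists>\<delta>>0. \<exists>B. B \<in> sets borel \<and> emeasure \<mu> (UNIV - B) = 0 \<and>
      (\<forall>g. homeo g \<and> dC0 f g \<le> \<delta> \<longrightarrow>
       (\<exists>H. usc (closure (orbit g x)) H \<and> compact_valued (closure (orbit g x)) H \<and>
          Dom (closure (orbit g x)) H \<in> sets \<mu> \<and>
          (\<forall>z\<in>ball x (\<delta>/4) \<inter> closure (orbit g x). emeasure \<mu> (H z) = 0) \<and>
          dist_Id_le (closure (orbit g x)) H \<epsilon> \<and> conj_rel (closure (orbit g x)) f H g \<and>
          emeasure \<mu> (UNIV - Dom (closure (orbit g x)) H)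
            \<le> emeasure \<mu> (UNIV - B \<inter> ball x \<delta> \<inter> closure (orbit g x))))"
  proof (intro exI[of _ \<delta>] exI[of _ UNIV] conjI allI impI d0)
    show "UNIV \<in> sets borel" by simp
    show "emeasure \<mu> (UNIV - UNIV) = 0" by simp
    fix g assume ga: "homeo g \<and> dC0 f g \<le> \<delta>"
    let ?Z = "closure (orbit g x)"
    obtain hh where hc: "continuous_on ?Z hh" and hf: "\<forall>z\<in>?Z. f (hh z) = hh (g z)"
      and hd: "\<forall>z\<in>?Z. dist (hh z) z \<le> \<epsilon>"
      using P[rule_format, OF ga] by blast
    let ?H = "\<lambda>z. {hh z}"
    have D: "Dom ?Z ?H = ?Z" unfolding Dom_def by auto
    have Zs: "?Z \<in> sets \<mu>" using sm by (simp add: borel_closed)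
    have U: "usc ?Z ?H" unfolding usc_def D
    proof (intro ballI allI impI)
      fix z V assume z: "z \<in> ?Z" and V: "open V \<and> {hh z} \<subseteq> V"
      then obtain e where e0: "e > 0" and eb: "ball (hh z) e \<subseteq> V"
        using open_contains_ball by blast
      obtain d where dp: "d > 0" and dd: "\<forall>w\<in>?Z. dist w z < d \<longrightarrow> dist (hh w) (hh z) < e"
        using hc z e0 unfolding continuous_on_iff by blast
      show "\<exists>\<gamma>>0. \<forall>w\<in>?Z. dist w z < \<gamma> \<longrightarrow> {hh w} \<subseteq> V"
      proof (intro exI[of _ d] conjI ballI impI dp)
        fix w assume "w \<in> ?Z" "dist w z < d"
        then have "dist (hh z) (hh w) < e" using dd by (simp add: dist_commute)
        then show "{hh w} \<subseteq> V" using eb by (auto simp: mem_ball)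
      qed
    qed
    have M: "emeasure \<mu> (UNIV - Dom ?Z ?H) \<le> emeasure \<mu> (UNIV - UNIV \<inter> ball x \<delta> \<inter> ?Z)"
    proof (rule emeasure_mono)
      show "UNIV - Dom ?Z ?H \<subseteq> UNIV - UNIV \<inter> ball x \<delta> \<inter> ?Z" unfolding D by auto
      have "ball x \<delta> \<inter> ?Z \<in> sets borel" by (intro sets.Int) (auto intro: borel_open borel_closed)
      then have "UNIV - ball x \<delta> \<inter> ?Z \<in> sets borel" by (metis sets.compl_sets space_borel)
      then show "UNIV - UNIV \<inter> ball x \<delta> \<inter> ?Z \<in> sets \<mu>" using sm by simp
    qed
    show "\<exists>H. usc ?Z H \<and> compact_valued ?Z H \<and> Dom ?Z H \<in> sets \<mu> \<and>
          (\<forall>z\<in>ball x (\<delta>/4) \<inter> ?Z. emeasure \<mu> (H z) = 0) \<and>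
          dist_Id_le ?Z H \<epsilon> \<and> conj_rel ?Z f H g \<and>
          emeasure \<mu> (UNIV - Dom ?Z H) \<le> emeasure \<mu> (UNIV - UNIV \<inter> ball x \<delta> \<inter> ?Z)"
    proof (intro exI[of _ ?H] conjI U M)
      show "compact_valued ?Z ?H" unfolding compact_valued_def by simp
      show "Dom ?Z ?H \<in> sets \<mu>" using D Zs by simp
      show "\<forall>z\<in>ball x (\<delta>/4) \<inter> ?Z. emeasure \<mu> {hh z} = 0" using na unfolding non_atomic_def by simp
      show "dist_Id_le ?Z ?H \<epsilon>" unfolding dist_Id_le_def using hd by (simp add: dist_commute)
      show "conj_rel ?Z f ?H g" unfolding conj_rel_def using hf by simp
    qed
  qed
qed

lemma pf_back:
  fixes \<mu> :: "'a::metric_space measure" and h :: "'a \<Rightarrow> 'b::metric_space"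
  assumes hom: "homeomorphism UNIV UNIV h k" and sm: "sets \<mu> = sets borel"
  shows "pushfwd (pushfwd \<mu> h) k = \<mu>"
proof -
  have ch: "continuous_on UNIV h" and ck: "continuous_on UNIV k"
    and kh: "\<And>x. k (h x) = x"
    using hom unfolding homeomorphism_def by auto
  have mh: "h \<in> measurable \<mu> borel"
    using borel_measurable_continuous_onI[OF ch] measurable_cong_sets[OF sm refl] by blast
  have mk: "k \<in> measurable borel borel" using borel_measurable_continuous_onI[OF ck] .
  have "pushfwd (pushfwd \<mu> h) k = distr \<mu> borel (k \<circ> h)"
    unfolding pushfwd_def by (rule distr_distr[OF mk mh])
  also have "\<dots> = distr \<mu> borel (\<lambda>x. x)" by (rule distr_cong) (auto simp: kh)
  also have "\<dots> = \<mu>" by (rule distr_id2) (simp add: sm)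
  finally show ?thesis .
qed


theorem proposition3p8:
  fixes f :: "'a::metric_space \<Rightarrow> 'a" and \<mu> :: "'a measure"
  assumes "compact (UNIV :: 'a set)"
    and "homeo f"
    and "sets \<mu> = sets borel"
    and "emeasure \<mu> UNIV > 0"
  shows "(measure_top_stable \<mu> f \<longrightarrow> Ts \<mu> f = UNIV)
    \<and> (\<forall>(h :: 'a \<Rightarrow> 'b::metric_space) k. compact (UNIV :: 'b set) \<and> homeomorphism UNIV UNIV h k \<longrightarrow>
          Ts (pushfwd \<mu> h) (h \<circ> f \<circ> k) = h ` Ts \<mu> f \<and>
          Sts (pushfwd \<mu> h) (h \<circ> f \<circ> k) = h ` Sts \<mu> f)
    \<and> (\<forall>x. non_atomic \<mu> \<and> top_stable_point f x \<longrightarrow> strong_mu_ts_point \<mu> f x)"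
  proof -
  note cX = assms(1) and sm = assms(3)
  have P1: "measure_top_stable \<mu> f \<longrightarrow> Ts \<mu> f = UNIV"
    using part1[OF sm] unfolding Ts_def by auto
  have P2: "Ts (pushfwd \<mu> h) (h \<circ> f \<circ> k) = h ` Ts \<mu> f \<and>
          Sts (pushfwd \<mu> h) (h \<circ> f \<circ> k) = h ` Sts \<mu> f"
    if cY: "compact (UNIV :: 'b::metric_space set)" and hom: "homeomorphism UNIV UNIV h k" for h :: "'a \<Rightarrow> 'b" and k
  proof -
    have kh: "\<And>x. k (h x) = x" and hk: "\<And>y. h (k y) = y"
      using hom unfolding homeomorphism_def by auto
    have pback: "pushfwd (pushfwd \<mu> h) k = \<mu>" by (rule pf_back[OF hom sm])
    have ff: "k \<circ> (h \<circ> f \<circ> k) \<circ> h = f" by (rule ext) (simp add: kh)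
    have sm2: "sets (pushfwd \<mu> h) = sets borel" by (rule pf_facts(1)[OF hom sm])
    have hom2: "homeomorphism UNIV UNIV k h" by (rule homeomorphism_symD[OF hom])
    show ?thesis
    proof
      show "Ts (pushfwd \<mu> h) (h \<circ> f \<circ> k) = h ` Ts \<mu> f"
      proof
        show "h ` Ts \<mu> f \<subseteq> Ts (pushfwd \<mu> h) (h \<circ> f \<circ> k)"
          using Ts_transfer[OF hom cX cY sm] by blast
        show "Ts (pushfwd \<mu> h) (h \<circ> f \<circ> k) \<subseteq> h ` Ts \<mu> f"
        proof
          fix y assume y: "y \<in> Ts (pushfwd \<mu> h) (h \<circ> f \<circ> k)"
          have "k y \<in> Ts (pushfwd (pushfwd \<mu> h) k) (k \<circ> (h \<circ> f \<circ> k) \<circ> h)"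
            by (rule Ts_transfer[OF hom2 cY cX sm2 y])
          then have "k y \<in> Ts \<mu> f" unfolding pback ff .
          then show "y \<in> h ` Ts \<mu> f" by (metis hk image_eqI)
        qed
      qed
      show "Sts (pushfwd \<mu> h) (h \<circ> f \<circ> k) = h ` Sts \<mu> f"
      proof
        show "h ` Sts \<mu> f \<subseteq> Sts (pushfwd \<mu> h) (h \<circ> f \<circ> k)"
          using Sts_transfer[OF hom cX cY sm] by blast
        show "Sts (pushfwd \<mu> h) (h \<circ> f \<circ> k) \<subseteq> h ` Sts \<mu> f"
        proof
          fix y assume y: "y \<in> Sts (pushfwd \<mu> h) (h \<circ> f \<circ> k)"
          have "k y \<in> Sts (pushfwd (pushfwd \<mu> h) k) (k \<circ> (h \<circ> f \<circ> k) \<circ> h)"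
            by (rule Sts_transfer[OF hom2 cY cX sm2 y])
          then have "k y \<in> Sts \<mu> f" unfolding pback ff .
          then show "y \<in> h ` Sts \<mu> f" by (metis hk image_eqI)
        qed
      qed
    qed
  qed
  have P3: "\<forall>x. non_atomic \<mu> \<and> top_stable_point f x \<longrightarrow> strong_mu_ts_point \<mu> f x"
    using part3[OF sm] by blast
  show ?thesis using P1 P2 P3 by blast
qed

end
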